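(* Let $T,S\in\mathcal{B}_A(\mathcal{H})$. Then $$\omega_A(T+S)\le\frac12\left[\omega_A(T)+\omega_A(S)+\sqrt{\big(\omega_A(T)-\omega_A(S)\big)^2+4\sup_{\theta\in\mathbb{R}}\big\|\Re_A(e^{i\theta}T)\,\Re_A(e^{i\theta}S)\big\|_A}\right]\le\omega_A(T)+\omega_A(S).$$
   Context: $\mathcal{H}$ is a complex Hilbert space with inner product $\langle\cdot,\cdot\rangle$, and $A$ is a fixed nonzero positive bounded operator on $\mathcal{H}$. Set $\langle x,y\rangle_A=\langle Ax,y\rangle$ and $\|x\|_A=\|A^{1/2}x\|$. $\mathcal{B}_A(\mathcal{H})$ is the set of bounded operators $T$ for which there exists a bounded $S$ with $\langle Tx,y\rangle_A=\langle x,Sy\rangle_A$ for all $x,y$ (equivalently $\mathcal{R}(T^*A)\subseteq\mathcal{R}(A)$). For $T\in\mathcal{B}_A(\mathcal{H})$, $T^{\sharp_A}=A^\dagger T^*A$ ($A^\dagger$ the Moore–Penrose inverse) is the reduced solution of $AX=T^*A$, and $\Re_A(T)=\frac{T+T^{\sharp_A}}{2}$. For an operator $T$ with $\|Tx\|_A\le\lambda\|x\|_A$ for some $\lambda>0$ and all $x$, $\|T\|_A=\sup\{\|Tx\|_A: \|x\|_A=1\}$, and $\omega_A(T)=\sup\{|\langle Tx,x\rangle_A|:\|x\|_A=1\}$. *)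

theory Defs
  imports "HOL-Analysis.Analysis"
begin

class cvector = real_vector +
  fixes cscale :: "complex \<Rightarrow> 'a \<Rightarrow> 'a"
  assumes cscale_add_right: "cscale a (x + y) = cscale a x + cscale a y"
    and cscale_add_left: "cscale (a + b) x = cscale a x + cscale b x"
    and cscale_cscale: "cscale a (cscale b x) = cscale (a * b) x"
    and cscale_one: "cscale 1 x = x"
    and scaleR_cscale: "scaleR r x = cscale (complex_of_real r) x"

class cinner_space = cvector + real_normed_vector +
  fixes cinner :: "'a \<Rightarrow> 'a \<Rightarrow> complex"
  assumes cinner_add_left: "cinner (x + y) z = cinner x z + cinner y z"
    and cinner_cscale_left: "cinner (cscale c x) y = c * cinner x y"
    and cinner_commute: "cinner y x = cnj (cinner x y)"
    and cinner_self_ge_zero: "0 \<le> Re (cinner x x)"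
    and cinner_self_eq_zero: "cinner x x = 0 \<longleftrightarrow> x = 0"
    and norm_eq_sqrt_cinner: "norm x = sqrt (Re (cinner x x))"

class chilbert = cinner_space + complete_space

definition clinear :: "('a::cvector \<Rightarrow> 'b::cvector) \<Rightarrow> bool" where
  "clinear T \<longleftrightarrow> (\<forall>x y. T (x + y) = T x + T y) \<and> (\<forall>c x. T (cscale c x) = cscale c (T x))"

definition bounded_op :: "('a::cinner_space \<Rightarrow> 'a) \<Rightarrow> bool" where
  "bounded_op T \<longleftrightarrow> clinear T \<and> (\<exists>K. \<forall>x. norm (T x) \<le> K * norm x)"

definition positive_op :: "('a::cinner_space \<Rightarrow> 'a) \<Rightarrow> bool" where
  "positive_op A \<longleftrightarrow> bounded_op A \<and>
     (\<forall>x. Im (cinner (A x) x) = 0 \<and> 0 \<le> Re (cinner (A x) x))"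

definition adj :: "('a::cinner_space \<Rightarrow> 'a) \<Rightarrow> ('a \<Rightarrow> 'a)" where
  "adj T = (THE S. \<forall>x y. cinner (T x) y = cinner x (S y))"

definition innerA :: "('a::cinner_space \<Rightarrow> 'a) \<Rightarrow> 'a \<Rightarrow> 'a \<Rightarrow> complex" where
  "innerA A x y = cinner (A x) y"

definition normA :: "('a::cinner_space \<Rightarrow> 'a) \<Rightarrow> 'a \<Rightarrow> real" where
  "normA A x = sqrt (Re (cinner (A x) x))"

definition inBA :: "('a::cinner_space \<Rightarrow> 'a) \<Rightarrow> ('a \<Rightarrow> 'a) \<Rightarrow> bool" where
  "inBA A T \<longleftrightarrow> bounded_op T \<and>
     (\<exists>S. bounded_op S \<and> (\<forall>x y. innerA A (T x) y = innerA A x (S y)))"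

text \<open>\<open>T\<^sup>\<sharp>\<^sup>A = A\<^sup>\<dagger> T\<^sup>* A\<close>, the reduced solution of \<open>AX = T\<^sup>*A\<close>: for each x,
  the unique z in \<open>N(A)\<^sup>\<bottom>\<close> with \<open>Az = T\<^sup>*(Ax)\<close> (this is exactly what the
  Moore--Penrose inverse does on \<open>R(A)\<close>).\<close>
definition sharpA :: "('a::cinner_space \<Rightarrow> 'a) \<Rightarrow> ('a \<Rightarrow> 'a) \<Rightarrow> ('a \<Rightarrow> 'a)" where
  "sharpA A T = (\<lambda>x. THE z. A z = adj T (A x) \<and> (\<forall>w. A w = 0 \<longrightarrow> cinner z w = 0))"

definition ReA :: "('a::cinner_space \<Rightarrow> 'a) \<Rightarrow> ('a \<Rightarrow> 'a) \<Rightarrow> ('a \<Rightarrow> 'a)" where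
  "ReA A T = (\<lambda>x. cscale (1/2) (T x + sharpA A T x))"

definition opnormA :: "('a::cinner_space \<Rightarrow> 'a) \<Rightarrow> ('a \<Rightarrow> 'a) \<Rightarrow> real" where
  "opnormA A T = Sup {normA A (T x) | x. normA A x = 1}"

definition omegaA :: "('a::cinner_space \<Rightarrow> 'a) \<Rightarrow> ('a \<Rightarrow> 'a) \<Rightarrow> real" where
  "omegaA A T = Sup {cmod (innerA A (T x) x) | x. normA A x = 1}"

end

theory Submission
  imports Defs
begin


lemma cscale_zero_left[simp]: "cscale 0 (x::'a::cvector) = 0"
  using scaleR_cscale[of 0 x] by simp

lemma cscale_zero_right[simp]: "cscale c (0::'a::cvector) = 0"
  using cscale_add_right[of c "0::'a" 0] by simp

lemma cscale_minus_right: "cscale c (- x::'a::cvector) = - cscale c x"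
proof -
  have "cscale c x + cscale c (-x) = 0" using cscale_add_right[of c x "-x"] by simp
  from minus_unique[OF this] show ?thesis by simp
qed

lemma cscale_diff_right: "cscale c (x - y::'a::cvector) = cscale c x - cscale c y"
  using cscale_add_right[of c x "-y"] by (simp add: cscale_minus_right)

lemma cscale_minus_left: "cscale (- c) (x::'a::cvector) = - cscale c x"
proof -
  have "cscale c x + cscale (-c) x = 0" using cscale_add_left[of c "-c" x] by simp
  from minus_unique[OF this] show ?thesis by simp
qed

lemma cscale_diff_left: "cscale (c - d) (x::'a::cvector) = cscale c x - cscale d x"
  using cscale_add_left[of c "-d" x] by (simp add: cscale_minus_left)

lemma cscale_of_real: "cscale (complex_of_real r) (x::'a::cvector) = scaleR r x"
  by (simp add: scaleR_cscale)

lemma clinear_scaleR: "clinear Z \<Longrightarrow> Z (scaleR r x) = scaleR r (Z x)"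
  by (simp add: clinear_def scaleR_cscale)

lemma clinear_add: "clinear Z \<Longrightarrow> Z (x + y) = Z x + Z y"
  by (simp add: clinear_def)

lemma clinear_diff: "clinear Z \<Longrightarrow> Z (x - y) = Z x - Z y"
  using clinear_add[of Z "x - y" y] by (simp add: eq_diff_eq)

lemma clinear_minus: "clinear Z \<Longrightarrow> Z (- x) = - Z x"
  using clinear_diff[of Z 0 x] clinear_diff[of Z 0 0] by simp

locale sip =
  fixes p :: "'a::cvector \<Rightarrow> 'a \<Rightarrow> complex"
  assumes add_left: "p (x + y) z = p x z + p y z"
    and cscale_left: "p (cscale c x) y = c * p x y"
    and herm: "p y x = cnj (p x y)"
    and p_pos: "0 \<le> Re (p x x)"
begin

definition nn :: "'a \<Rightarrow> real" where "nn x = sqrt (Re (p x x))"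

lemma add_right: "p x (y + z) = p x y + p x z"
  using herm[of x "y+z"] herm[of x y] herm[of x z] add_left[of y z x] by simp

lemma cscale_right: "p x (cscale c y) = cnj c * p x y"
  using herm[of x "cscale c y"] herm[of x y] cscale_left[of c y x] by simp

lemma zero_left[simp]: "p 0 y = 0"
  using add_left[of 0 0 y] by simp

lemma zero_right[simp]: "p x 0 = 0"
  using add_right[of x 0 0] by simp

lemma minus_left: "p (- x) y = - p x y"
proof -
  have "p x y + p (-x) y = 0" using add_left[of x "-x" y] by simp
  from minus_unique[OF this] show ?thesis by simp
qed

lemma minus_right: "p x (- y) = - p x y"
proof -
  have "p x y + p x (-y) = 0" using add_right[of x y "-y"] by simp
  from minus_unique[OF this] show ?thesis by simp
qed

lemma diff_left: "p (x - y) z = p x z - p y z"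
  using add_left[of x "-y" z] by (simp add: minus_left)

lemma diff_right: "p x (y - z) = p x y - p x z"
  using add_right[of x y "-z"] by (simp add: minus_right)

lemma scaleR_left: "p (scaleR r x) y = complex_of_real r * p x y"
  by (simp add: scaleR_cscale cscale_left)

lemma scaleR_right: "p x (scaleR r y) = complex_of_real r * p x y"
  by (simp add: scaleR_cscale cscale_right)

lemma self_Im[simp]: "Im (p x x) = 0"
  using herm[of x x] by (metis cnj.simps(2) complex.sel(2) neg_equal_zero)

lemma self_real: "p x x = complex_of_real (Re (p x x))"
  using self_Im[of x] by (simp add: complex_eq_iff)

lemma nn_nonneg[simp]: "0 \<le> nn x"
  using p_pos[of x] by (simp add: nn_def)

lemma nn_sq: "(nn x)\<^sup>2 = Re (p x x)"
  using p_pos[of x] unfolding nn_def by simp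

lemma nn_sq': "nn x * nn x = Re (p x x)"
  using nn_sq by (simp add: power2_eq_square)

lemma expand: "Re (p (x - cscale c y) (x - cscale c y)) =
    Re (p x x) - 2 * Re (cnj c * p x y) + (cmod c)\<^sup>2 * Re (p y y)"
proof -
  have "p (x - cscale c y) (x - cscale c y) = p x x - cnj c * p x y - c * p y x + c * cnj c * p y y"
    by (simp add: diff_left diff_right cscale_left cscale_right algebra_simps)
  also have "p y x = cnj (p x y)" by (rule herm)
  finally have e: "p (x - cscale c y) (x - cscale c y) = p x x - cnj c * p x y - c * cnj (p x y) + c * cnj c * p y y" .
  have "c * cnj c = complex_of_real ((cmod c)\<^sup>2)" by (rule complex_norm_square[symmetric])
  then have "Re (c * cnj c * p y y) = (cmod c)\<^sup>2 * Re (p y y)"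
    by (subst self_real) (simp del: of_real_power)
  moreover have "Re (c * cnj (p x y)) = Re (cnj c * p x y)"
  proof -
    have "c * cnj (p x y) = cnj (cnj c * p x y)" by simp
    then show ?thesis by (metis cnj.simps(1))
  qed
  ultimately show ?thesis using e by simp
qed

lemma cs_sq: "(cmod (p x y))\<^sup>2 \<le> Re (p x x) * Re (p y y)"
proof (cases "Re (p y y) > 0")
  case True
  define Q where "Q = Re (p y y)"
  define c where "c = p x y / complex_of_real Q"
  have "0 \<le> Re (p (x - cscale c y) (x - cscale c y))" by (rule p_pos)
  also have "\<dots> = Re (p x x) - 2 * Re (cnj c * p x y) + (cmod c)\<^sup>2 * Q"
    by (simp add: expand Q_def)
  also have "cnj c * p x y = complex_of_real ((cmod (p x y))\<^sup>2 / Q)"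
    unfolding c_def of_real_divide complex_norm_square by (simp add: mult.commute)
  also have "(cmod c)\<^sup>2 = (cmod (p x y))\<^sup>2 / Q\<^sup>2"
    using True by (simp add: c_def Q_def norm_divide power_divide)
  finally have "0 \<le> Re (p x x) - (cmod (p x y))\<^sup>2 / Q"
    using True by (simp add: Q_def power2_eq_square field_simps)
  then show ?thesis using True by (simp add: Q_def field_simps)
next
  case False
  then have Q0: "Re (p y y) = 0" using p_pos[of y] by linarith
  show ?thesis
  proof (rule ccontr)
    assume "\<not> ?thesis"
    then have s: "p x y \<noteq> 0" using Q0 by auto
    define r where "r = (Re (p x x) + 1) / (2 * (cmod (p x y))\<^sup>2)"
    define c where "c = complex_of_real r * p x y"
    have "0 \<le> Re (p (x - cscale c y) (x - cscale c y))" by (rule p_pos)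
    also have "\<dots> = Re (p x x) - 2 * Re (cnj c * p x y)"
      by (simp add: expand Q0)
    also have "cnj c * p x y = complex_of_real (r * (cmod (p x y))\<^sup>2)"
      unfolding c_def of_real_mult complex_norm_square by (simp add: mult.commute)
    finally have "0 \<le> Re (p x x) - 2 * (r * (cmod (p x y))\<^sup>2)" by simp
    also have "2 * (r * (cmod (p x y))\<^sup>2) = Re (p x x) + 1"
      using s by (simp add: r_def)
    finally show False by simp
  qed
qed

lemma cs: "cmod (p x y) \<le> nn x * nn y"
proof -
  have "(cmod (p x y))\<^sup>2 \<le> (nn x * nn y)\<^sup>2"
    using cs_sq[of x y] by (simp add: power_mult_distrib nn_sq)
  then show ?thesis by (rule power2_le_imp_le) simp
qed

lemma cs_Re: "Re (p x y) \<le> nn x * nn y"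
  using cs[of x y] complex_Re_le_cmod[of "p x y"] by linarith


lemma nn_cscale: "nn (cscale c x) = cmod c * nn x"
proof -
  have "Re (p (cscale c x) (cscale c x)) = (cmod c)\<^sup>2 * Re (p x x)"
  proof -
    have "p (cscale c x) (cscale c x) = (c * cnj c) * p x x"
      by (simp add: cscale_left cscale_right)
    also have "c * cnj c = complex_of_real ((cmod c)\<^sup>2)" by (rule complex_norm_square[symmetric])
    finally show ?thesis by (subst (asm) self_real) (simp del: of_real_power)
  qed
  then show ?thesis by (simp add: nn_def real_sqrt_mult)
qed

lemma nn_scaleR: "nn (scaleR r x) = \<bar>r\<bar> * nn x"
  using nn_cscale[of "complex_of_real r" x] by (simp add: cscale_of_real)

lemma nn_minus: "nn (- x) = nn x"
  by (simp add: nn_def minus_left minus_right)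

lemma Re_add_add: "Re (p (x + y) (x + y)) = Re (p x x) + 2 * Re (p x y) + Re (p y y)"
proof -
  have "p (x + y) (x + y) = p x x + p x y + p y x + p y y"
    by (simp add: add_left add_right)
  moreover have "Re (p y x) = Re (p x y)" using herm[of x y] by simp
  ultimately show ?thesis by simp
qed

lemma Re_diff_diff: "Re (p (x - y) (x - y)) = Re (p x x) - 2 * Re (p x y) + Re (p y y)"
proof -
  have "p (x - y) (x - y) = p x x - p x y - p y x + p y y"
    by (simp add: diff_left diff_right)
  moreover have "Re (p y x) = Re (p x y)" using herm[of x y] by simp
  ultimately show ?thesis by simp
qed

lemma nn_add: "nn (x + y) \<le> nn x + nn y"
proof -
  have "(nn (x + y))\<^sup>2 = (nn x)\<^sup>2 + 2 * Re (p x y) + (nn y)\<^sup>2"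
    by (simp add: nn_sq Re_add_add)
  also have "\<dots> \<le> (nn x + nn y)\<^sup>2"
    using cs_Re[of x y] by (simp add: power2_sum)
  finally show ?thesis by (rule power2_le_imp_le) simp
qed

lemma nn_diff: "nn (x - y) \<le> nn x + nn y"
  using nn_add[of x "-y"] by (simp add: nn_minus)

lemma parallelogram: "(nn (x + y))\<^sup>2 + (nn (x - y))\<^sup>2 = 2 * (nn x)\<^sup>2 + 2 * (nn y)\<^sup>2"
  by (simp add: nn_sq Re_add_add Re_diff_diff)

definition selfadj :: "('a \<Rightarrow> 'a) \<Rightarrow> bool" where
  "selfadj Z \<longleftrightarrow> (\<forall>u v. p (Z u) v = p u (Z v))"

lemma selfadj_real: "selfadj Z \<Longrightarrow> Im (p (Z u) u) = 0"
  unfolding selfadj_def using herm[of u "Z u"]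
  by (metis cnj.simps(2) complex.sel(2) neg_equal_zero)

lemma pol:
  assumes Z: "clinear Z" and sa: "selfadj Z" and c: "0 \<le> c"
    and b: "\<And>u. cmod (p (Z u) u) \<le> c * (nn u)\<^sup>2"
  shows "nn (Z u) \<le> c * nn u"
proof -
  have Zadd: "Z (x + y) = Z x + Z y" for x y using Z by (simp add: clinear_def)
  have Zsc: "Z (scaleR r x) = scaleR r (Z x)" for r x
    using Z by (simp add: clinear_def scaleR_cscale)
  have Zdiff: "Z (x - y) = Z x - Z y" for x y
    using Zadd[of "x - y" y] by (simp add: eq_diff_eq)
  have key: "4 * Re (p (Z u) v) \<le> 2 * c * ((nn u)\<^sup>2 + (nn v)\<^sup>2)" for v
  proof -
    have e1: "Re (p (Z (u + v)) (u + v)) = Re (p (Z u) u) + Re (p (Z u) v) + Re (p (Z v) u) + Re (p (Z v) v)"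
      by (simp add: Zadd add_left add_right)
    have e2: "Re (p (Z (u - v)) (u - v)) = Re (p (Z u) u) - Re (p (Z u) v) - Re (p (Z v) u) + Re (p (Z v) v)"
      by (simp add: Zdiff diff_left diff_right)
    have e3: "Re (p (Z v) u) = Re (p (Z u) v)"
      using sa herm[of "Z u" v] unfolding selfadj_def by (metis cnj.simps(1))
    have "Re (p (Z (u + v)) (u + v)) \<le> c * (nn (u + v))\<^sup>2"
      using b[of "u+v"] complex_Re_le_cmod[of "p (Z (u + v)) (u + v)"] by linarith
    moreover have "- Re (p (Z (u - v)) (u - v)) \<le> c * (nn (u - v))\<^sup>2"
      using b[of "u-v"] abs_Re_le_cmod[of "p (Z (u - v)) (u - v)"] by linarith
    ultimately have "4 * Re (p (Z u) v) \<le> c * ((nn (u + v))\<^sup>2 + (nn (u - v))\<^sup>2)"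
      using e1 e2 e3 by (simp add: algebra_simps)
    then show ?thesis by (subst (asm) parallelogram) (simp add: algebra_simps)
  qed
  define N where "N = nn (Z u)"
  define U where "U = nn u"
  have pt: "Re (p (Z u) (scaleR t (Z u))) = t * N\<^sup>2" for t
    by (simp add: scaleR_right N_def nn_sq)
  have nt: "(nn (scaleR t (Z u)))\<^sup>2 = t\<^sup>2 * N\<^sup>2" for t
    by (simp add: nn_scaleR N_def power_mult_distrib)
  show ?thesis
  proof (cases "c = 0")
    case True
    have "4 * N\<^sup>2 \<le> 0" using key[of "scaleR 1 (Z u)"] pt[of 1] nt[of 1] True by simp
    then have "N = 0" by simp
    then show ?thesis using True by (simp add: N_def)
  next
    case False
    then have cp: "c > 0" using c by simp
    have "4 * ((1/c) * N\<^sup>2) \<le> 2 * c * (U\<^sup>2 + (1/c)\<^sup>2 * N\<^sup>2)"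
      using key[of "scaleR (1/c) (Z u)"] pt[of "1/c"] nt[of "1/c"] by (simp add: U_def)
    then have "4 * N\<^sup>2 \<le> 2 * c\<^sup>2 * U\<^sup>2 + 2 * N\<^sup>2"
      using cp by (simp add: field_simps power2_eq_square)
    then have "N\<^sup>2 \<le> (c * U)\<^sup>2" by (simp add: power_mult_distrib)
    then have "N \<le> c * U" by (rule power2_le_imp_le) (simp add: U_def c)
    then show ?thesis by (simp add: N_def U_def)
  qed
qed


lemma hom:
  assumes Z: "clinear Z" and b: "\<And>u. nn u = 1 \<Longrightarrow> cmod (p (Z u) u) \<le> w"
  shows "cmod (p (Z u) u) \<le> w * (nn u)\<^sup>2"
proof (cases "nn u = 0")
  case True
  then show ?thesis using cs[of "Z u" u] by simp
next
  case False
  then have np: "nn u > 0" using nn_nonneg[of u] by linarith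
  define u' where "u' = scaleR (1 / nn u) u"
  have "nn u' = 1" using np by (simp add: u'_def nn_scaleR)
  then have "cmod (p (Z u') u') \<le> w" by (rule b)
  moreover have "cmod (p (Z u') u') = (1 / nn u)\<^sup>2 * cmod (p (Z u) u)"
  proof -
    have eq: "p (Z u') u' = complex_of_real ((1 / nn u)\<^sup>2) * p (Z u) u"
      by (simp add: u'_def clinear_scaleR[OF Z] scaleR_left scaleR_right power2_eq_square)
    show ?thesis by (simp only: eq norm_mult norm_of_real) simp
  qed
  ultimately have "(1 / nn u)\<^sup>2 * cmod (p (Z u) u) \<le> w"
    by simp
  then show ?thesis using np by (simp add: field_simps power2_eq_square)
qed

lemma homn:
  assumes Z: "clinear Z" and b: "\<And>u. nn u = 1 \<Longrightarrow> nn (Z u) \<le> w"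
    and z: "\<And>u. nn u = 0 \<Longrightarrow> nn (Z u) = 0" and w: "0 \<le> w"
  shows "nn (Z u) \<le> w * nn u"
proof (cases "nn u = 0")
  case True
  then show ?thesis using z by simp
next
  case False
  then have np: "nn u > 0" using nn_nonneg[of u] by linarith
  define u' where "u' = scaleR (1 / nn u) u"
  have "nn u' = 1" using np by (simp add: u'_def nn_scaleR)
  then have "nn (Z u') \<le> w" by (rule b)
  moreover have "nn (Z u') = (1 / nn u) * nn (Z u)"
    using np by (simp add: u'_def clinear_scaleR[OF Z] nn_scaleR)
  ultimately show ?thesis using np by (simp add: field_simps)
qed

lemma lb:
  assumes b: "\<And>v. cmod (p (X v) v) \<le> a * (nn v)\<^sup>2" and am: "a \<le> mu"
  shows "(mu - a) * nn v \<le> nn (scaleR mu v - X v)"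
proof (cases "nn v = 0")
  case True
  then show ?thesis by simp
next
  case False
  then have np: "nn v > 0" using nn_nonneg[of v] by linarith
  have "Re (p (scaleR mu v - X v) v) = mu * (nn v)\<^sup>2 - Re (p (X v) v)"
    by (simp add: diff_left scaleR_left nn_sq)
  moreover have "Re (p (X v) v) \<le> a * (nn v)\<^sup>2"
    using b[of v] complex_Re_le_cmod[of "p (X v) v"] by linarith
  ultimately have "(mu - a) * (nn v)\<^sup>2 \<le> Re (p (scaleR mu v - X v) v)"
    by (simp add: algebra_simps)
  also have "\<dots> \<le> nn (scaleR mu v - X v) * nn v" by (rule cs_Re)
  finally have "((mu - a) * nn v) * nn v \<le> nn (scaleR mu v - X v) * nn v"
    by (simp add: power2_eq_square mult.assoc)
  then show ?thesis using np by simp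
qed

lemma Lsub:
  assumes X: "clinear X" and Y: "clinear Y"
    and bX: "\<And>v. cmod (p (X v) v) \<le> a * (nn v)\<^sup>2"
    and bY: "\<And>v. cmod (p (Y v) v) \<le> b * (nn v)\<^sup>2"
    and am: "a \<le> mu" and bm: "b \<le> mu" and mu: "0 \<le> mu"
    and bZ: "\<And>v. nn (X v + Y v) \<le> mu * nn v"
    and u: "nn u = 1" and near: "mu - d \<le> Re (p (X u + Y u) u)" and d: "0 \<le> d"
  shows "(mu - a) * (mu - b) \<le> nn (X (Y u)) + mu * sqrt (2 * mu * d)"
proof -
  define e where "e = (X u + Y u) - scaleR mu u"
  have "Re (p e e) = Re (p (X u + Y u) (X u + Y u)) - 2 * Re (cnj (complex_of_real mu) * p (X u + Y u) u)
      + (cmod (complex_of_real mu))\<^sup>2 * Re (p u u)"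
    unfolding e_def using expand[of "X u + Y u" "complex_of_real mu" u] by (simp add: cscale_of_real)
  also have "\<dots> = (nn (X u + Y u))\<^sup>2 - 2 * mu * Re (p (X u + Y u) u) + mu\<^sup>2"
    using u nn_sq[of u] by (simp add: nn_sq)
  also have "\<dots> \<le> mu\<^sup>2 - 2 * mu * (mu - d) + mu\<^sup>2"
  proof -
    have "nn (X u + Y u) \<le> mu" using bZ[of u] u by simp
    then have "(nn (X u + Y u))\<^sup>2 \<le> mu\<^sup>2" by (rule power_mono) simp
    moreover have "2 * mu * (mu - d) \<le> 2 * mu * Re (p (X u + Y u) u)"
      using near mu by (simp add: mult_left_mono)
    ultimately show ?thesis by linarith
  qed
  also have "\<dots> = 2 * mu * d" by (simp add: algebra_simps power2_eq_square)
  finally have "(nn e)\<^sup>2 \<le> 2 * mu * d" by (simp add: nn_sq)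
  then have ne: "nn e \<le> sqrt (2 * mu * d)" using real_le_rsqrt by blast
  define v where "v = scaleR mu u - Y u"
  define w where "w = scaleR mu v - X v"
  have wexp: "w = X (Y u) - scaleR mu e"
    unfolding w_def v_def e_def
    by (simp add: clinear_diff[OF X] clinear_scaleR[OF X] algebra_simps)
  have "(mu - a) * (mu - b) = (mu - a) * ((mu - b) * nn u)" using u by simp
  also have "\<dots> \<le> (mu - a) * nn v"
    unfolding v_def using lb[OF bY bm, of u] am by (simp add: mult_left_mono)
  also have "\<dots> \<le> nn w" unfolding w_def by (rule lb[OF bX am])
  also have "\<dots> \<le> nn (X (Y u)) + nn (scaleR mu e)" unfolding wexp by (rule nn_diff)
  also have "\<dots> \<le> nn (X (Y u)) + mu * sqrt (2 * mu * d)"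
    using ne mu by (simp add: nn_scaleR mult_left_mono)
  finally show ?thesis .
qed


lemma lam_facts:
  fixes a b m :: real
  assumes "0 \<le> a" "0 \<le> b" "0 \<le> m"
  defines "lam \<equiv> 1/2 * (a + b + sqrt ((a - b)\<^sup>2 + 4 * m))"
  shows "a \<le> lam" "b \<le> lam" "(lam - a) * (lam - b) = m"
proof -
  define s where "s = sqrt ((a - b)\<^sup>2 + 4 * m)"
  have s2: "s\<^sup>2 = (a - b)\<^sup>2 + 4 * m" using assms by (simp add: s_def)
  have "sqrt ((a - b)\<^sup>2) \<le> s" unfolding s_def
    by (rule real_sqrt_le_mono) (use assms in simp)
  then have "\<bar>a - b\<bar> \<le> s" by simp
  then show "a \<le> lam" "b \<le> lam" by (auto simp: lam_def s_def[symmetric])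
  have "(lam - a) * (lam - b) = (s\<^sup>2 - (a - b)\<^sup>2) / 4"
    unfolding lam_def s_def[symmetric] by (simp add: field_simps power2_eq_square)
  then show "(lam - a) * (lam - b) = m" using s2 by simp
qed

lemma key:
  assumes X: "clinear X" and Y: "clinear Y" and sX: "selfadj X" and sY: "selfadj Y"
    and bX: "\<And>v. cmod (p (X v) v) \<le> a * (nn v)\<^sup>2"
    and bY: "\<And>v. cmod (p (Y v) v) \<le> b * (nn v)\<^sup>2"
    and bXY: "\<And>v. nn (X (Y v)) \<le> m * nn v"
    and a: "0 \<le> a" and b: "0 \<le> b" and m: "0 \<le> m" and x: "nn x = 1"
  shows "cmod (p (X x + Y x) x) \<le> 1/2 * (a + b + sqrt ((a - b)\<^sup>2 + 4 * m))"
proof -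
  define lam where "lam = 1/2 * (a + b + sqrt ((a - b)\<^sup>2 + 4 * m))"
  have la: "a \<le> lam" and lb': "b \<le> lam" and lm: "(lam - a) * (lam - b) = m"
    using lam_facts[OF a b m] by (simp_all add: lam_def)
  define Z where "Z = (\<lambda>u. X u + Y u)"
  have Z: "clinear Z" using X Y unfolding clinear_def Z_def
    by (simp add: cscale_add_right algebra_simps)
  have sZ: "selfadj Z" using sX sY unfolding selfadj_def Z_def by (simp add: add_left add_right)
  have bZ: "cmod (p (Z u) u) \<le> (a + b) * (nn u)\<^sup>2" for u
  proof -
    have "cmod (p (Z u) u) \<le> cmod (p (X u) u) + cmod (p (Y u) u)"
      unfolding Z_def add_left by (rule norm_triangle_ineq)
    then show ?thesis using bX[of u] bY[of u] by (simp add: algebra_simps)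
  qed
  define Sset where "Sset = {cmod (p (Z u) u) | u. nn u = 1}"
  define mu where "mu = Sup Sset"
  have ne: "Sset \<noteq> {}" using x unfolding Sset_def by blast
  have bdd: "bdd_above Sset"
  proof (rule bdd_aboveI)
    fix s assume "s \<in> Sset"
    then obtain u where "nn u = 1" "s = cmod (p (Z u) u)" unfolding Sset_def by blast
    then show "s \<le> a + b" using bZ[of u] by simp
  qed
  have up: "cmod (p (Z u) u) \<le> mu" if "nn u = 1" for u
    unfolding mu_def by (rule cSup_upper[OF _ bdd]) (use that Sset_def in blast)
  have mu0: "0 \<le> mu" using up[OF x] by (meson norm_ge_zero order_trans)
  have homZ: "cmod (p (Z u) u) \<le> mu * (nn u)\<^sup>2" for u by (rule hom[OF Z up])
  have nZ: "nn (Z u) \<le> mu * nn u" for u by (rule pol[OF Z sZ mu0 homZ])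
  show ?thesis
  proof (rule ccontr)
    assume "\<not> ?thesis"
    then have "lam < cmod (p (Z x) x)" by (simp add: lam_def Z_def)
    then have ml: "lam < mu" using up[OF x] by linarith
    have am: "a \<le> mu" and bm: "b \<le> mu" using la lb' ml by linarith+
    define g where "g = (mu - a) * (mu - b) - m"
    have "(lam - a) * (lam - b) < (mu - a) * (mu - b)"
    proof -
      have "(lam - a) * (lam - b) \<le> (lam - a) * (mu - b)"
        using la ml by (intro mult_left_mono) auto
      also have "\<dots> < (mu - a) * (mu - b)"
        using ml lb' by (intro mult_strict_right_mono) auto
      finally show ?thesis .
    qed
    then have g: "0 < g" using lm by (simp add: g_def)
    define d where "d = (g / (mu + 1))\<^sup>2 / (2 * mu + 1)"
    have d: "0 < d" using g mu0 by (simp add: d_def)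
    have "mu - d < mu" using d by simp
    then obtain s where "s \<in> Sset" "mu - d < s"
      using less_cSup_iff[OF ne bdd] unfolding mu_def by blast
    then obtain u where u: "nn u = 1" and near: "mu - d < cmod (p (Z u) u)"
      unfolding Sset_def by blast
    have im: "Im (p (Z u) u) = 0" by (rule selfadj_real[OF sZ])
    have cm: "cmod (p (Z u) u) = \<bar>Re (p (Z u) u)\<bar>" using im by (simp add: cmod_def)
    have bound: "(mu - a) * (mu - b) \<le> m + mu * sqrt (2 * mu * d)"
    proof (cases "0 \<le> Re (p (Z u) u)")
      case True
      have "(mu - a) * (mu - b) \<le> nn (X (Y u)) + mu * sqrt (2 * mu * d)"
        by (rule Lsub[OF X Y bX bY am bm mu0 _ u]) (use nZ Z_def near cm True d in auto)
      then show ?thesis using bXY[of u] u by simp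
    next
      case False
      define X' where "X' = (\<lambda>v. - X v)"
      define Y' where "Y' = (\<lambda>v. - Y v)"
      have X': "clinear X'" using X unfolding clinear_def X'_def
        by (simp add: cscale_minus_right)
      have Y': "clinear Y'" using Y unfolding clinear_def Y'_def
        by (simp add: cscale_minus_right)
      have bX': "cmod (p (X' v) v) \<le> a * (nn v)\<^sup>2" for v
        using bX[of v] by (simp add: X'_def minus_left)
      have bY': "cmod (p (Y' v) v) \<le> b * (nn v)\<^sup>2" for v
        using bY[of v] by (simp add: Y'_def minus_left)
      have nZ': "nn (X' v + Y' v) \<le> mu * nn v" for v
        using nZ[of v] nn_minus[of "X v + Y v"] by (simp add: X'_def Y'_def Z_def)
      have "(mu - a) * (mu - b) \<le> nn (X' (Y' u)) + mu * sqrt (2 * mu * d)"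
        by (rule Lsub[OF X' Y' bX' bY' am bm mu0 nZ' u])
           (use near cm False d in \<open>auto simp: X'_def Y'_def Z_def minus_left diff_left add_left\<close>)
      moreover have "nn (X' (Y' u)) = nn (X (Y u))"
        by (simp add: X'_def Y'_def clinear_minus[OF X] nn_minus)
      ultimately show ?thesis using bXY[of u] u by simp
    qed
    have "2 * mu * d \<le> (g / (mu + 1))\<^sup>2"
    proof -
      have "2 * mu * d = (2 * mu / (2 * mu + 1)) * (g / (mu + 1))\<^sup>2"
        by (simp add: d_def)
      also have "\<dots> \<le> 1 * (g / (mu + 1))\<^sup>2"
        using mu0 by (intro mult_right_mono) auto
      finally show ?thesis by simp
    qed
    then have "sqrt (2 * mu * d) \<le> sqrt ((g / (mu + 1))\<^sup>2)" by (rule real_sqrt_le_mono)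
    then have "sqrt (2 * mu * d) \<le> g / (mu + 1)" using g mu0 by simp
    then have "mu * sqrt (2 * mu * d) \<le> mu * (g / (mu + 1))"
      using mu0 by (rule mult_left_mono)
    also have "\<dots> < g" using g mu0 by (simp add: field_simps)
    finally have "mu * sqrt (2 * mu * d) < g" .
    then show False using bound by (simp add: g_def)
  qed
qed

end


interpretation ci: sip "cinner :: 'a::cinner_space \<Rightarrow> 'a \<Rightarrow> complex"
  by unfold_locales (simp_all add: cinner_add_left cinner_cscale_left cinner_self_ge_zero
      flip: cinner_commute)

lemma ci_nn: "ci.nn x = norm x"
  by (simp add: ci.nn_def norm_eq_sqrt_cinner)

lemma cinner_ext: "(\<And>x. cinner x a = cinner x b) \<Longrightarrow> a = (b::'a::cinner_space)"
proof -
  assume h: "\<And>x. cinner x a = cinner x b"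
  have "cinner (a - b) (a - b) = 0" using h[of "a - b"] by (simp add: ci.diff_right)
  then show ?thesis by (simp add: cinner_self_eq_zero)
qed

lemma clinear_zero: "clinear T \<Longrightarrow> T 0 = 0"
  using clinear_diff[of T 0 0] by simp

lemma bounded_op_real:
  assumes "bounded_op (T::'a::cinner_space \<Rightarrow> 'a)"
  shows "bounded_linear T"
proof -
  from assms obtain K where T: "clinear T" and K: "\<And>x. norm (T x) \<le> K * norm x"
    unfolding bounded_op_def by blast
  show ?thesis
    by (rule bounded_linear_intro[of _ K])
       (use T K in \<open>simp_all add: clinear_add clinear_scaleR mult.commute\<close>)
qed

lemma bounded_op_K:
  assumes "bounded_op (T::'a::cinner_space \<Rightarrow> 'a)"
  obtains K where "0 \<le> K" "\<And>x. norm (T x) \<le> K * norm x"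
proof -
  from assms obtain K where K: "\<And>x. norm (T x) \<le> K * norm x"
    unfolding bounded_op_def by blast
  have "norm (T x) \<le> max K 0 * norm x" for x
    using K[of x] by (metis max.cobounded1 mult_right_mono norm_ge_zero order_trans)
  then show ?thesis by (intro that[of "max K 0"]) auto
qed

lemma proj:
  fixes M :: "'a::chilbert set"
  assumes cl: "closed M" and z: "0 \<in> M" and ad: "\<And>x y. x \<in> M \<Longrightarrow> y \<in> M \<Longrightarrow> x + y \<in> M"
    and sc: "\<And>c x. x \<in> M \<Longrightarrow> cscale c x \<in> M"
  shows "\<exists>m\<in>M. \<forall>v\<in>M. cinner (y - m) v = 0"
proof -
  define Q where "Q = {(norm (y - v))\<^sup>2 | v. v \<in> M}"
  define D where "D = Inf Q"
  have Qne: "Q \<noteq> {}" using z unfolding Q_def by blast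
  have Qbdd: "bdd_below Q" unfolding Q_def by (rule bdd_belowI[of _ 0]) auto
  have Dle: "D \<le> (norm (y - v))\<^sup>2" if "v \<in> M" for v
    unfolding D_def by (rule cInf_lower[OF _ Qbdd]) (use that Q_def in blast)
  have "\<exists>v. v \<in> M \<and> (norm (y - v))\<^sup>2 < D + inverse (real (Suc n))" for n
  proof -
    have "D < D + inverse (real (Suc n))" by simp
    then obtain q where "q \<in> Q" "q < D + inverse (real (Suc n))"
      using cInf_less_iff[OF Qne Qbdd] unfolding D_def by blast
    then show ?thesis unfolding Q_def by blast
  qed
  then obtain mm where mmM: "\<And>n. mm n \<in> M"
    and mmD: "\<And>n. (norm (y - mm n))\<^sup>2 < D + inverse (real (Suc n))"
    by metis
  have half: "scaleR (1/2) (a + b) \<in> M" if "a \<in> M" "b \<in> M" for a b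
    using ad[OF that] sc by (simp add: scaleR_cscale)
  have cd: "(norm (mm i - mm j))\<^sup>2 \<le> 2 * inverse (real (Suc i)) + 2 * inverse (real (Suc j))" for i j
  proof -
    define u where "u = y - mm i"
    define w where "w = y - mm j"
    define md where "md = scaleR (1/2) (mm i + mm j)"
    have "u + w = scaleR 2 (y - md)" unfolding u_def w_def md_def
      by (simp add: algebra_simps scaleR_2)
    then have "(norm (u + w))\<^sup>2 = 4 * (norm (y - md))\<^sup>2"
      by (simp add: power_mult_distrib)
    moreover have "D \<le> (norm (y - md))\<^sup>2" using Dle half[OF mmM mmM] md_def by simp
    moreover have "u - w = mm j - mm i" unfolding u_def w_def by simp
    moreover have "(norm (u + w))\<^sup>2 + (norm (u - w))\<^sup>2 = 2 * (norm u)\<^sup>2 + 2 * (norm w)\<^sup>2"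
      using ci.parallelogram[of u w] by (simp add: ci_nn)
    moreover note mmD[of i] mmD[of j]
    ultimately show ?thesis unfolding u_def w_def by (simp add: norm_minus_commute)
  qed
  have "Cauchy mm"
  proof (rule CauchyI)
    fix e :: real assume e: "0 < e"
    obtain N :: nat where N: "4 / e\<^sup>2 < real N" using reals_Archimedean2 by blast
    have "norm (mm i - mm j) < e" if "i \<ge> N" "j \<ge> N" for i j
    proof -
      have Np: "0 < real N" using N e by (smt (verit) divide_pos_pos zero_less_power)
      have "inverse (real (Suc i)) \<le> inverse (real N)" using that Np
        by (intro le_imp_inverse_le) auto
      moreover have "inverse (real (Suc j)) \<le> inverse (real N)" using that Np
        by (intro le_imp_inverse_le) auto
      moreover have "4 * inverse (real N) < e\<^sup>2" using N e Np
        by (simp add: field_simps)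
      ultimately have "(norm (mm i - mm j))\<^sup>2 < e\<^sup>2" using cd[of i j] by linarith
      then show ?thesis using e by (simp add: power_less_imp_less_base)
    qed
    then show "\<exists>M. \<forall>m\<ge>M. \<forall>n\<ge>M. norm (mm m - mm n) < e" by blast
  qed
  then obtain m where lim: "mm \<longlonglongrightarrow> m" using Cauchy_convergent convergent_def by blast
  have mM: "m \<in> M" by (rule closed_sequentially[OF cl mmM lim])
  have minim: "(norm (y - m))\<^sup>2 \<le> (norm (y - v))\<^sup>2" if "v \<in> M" for v
  proof (rule LIMSEQ_le)
    show "(\<lambda>n. (norm (y - mm n))\<^sup>2) \<longlonglongrightarrow> (norm (y - m))\<^sup>2"
      by (intro tendsto_intros lim)
    show "(\<lambda>n. (norm (y - v))\<^sup>2 + inverse (real (Suc n))) \<longlonglongrightarrow> (norm (y - v))\<^sup>2"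
      using tendsto_add[OF tendsto_const LIMSEQ_inverse_real_of_nat] by simp
    show "\<exists>N. \<forall>n\<ge>N. (norm (y - mm n))\<^sup>2 \<le> (norm (y - v))\<^sup>2 + inverse (real (Suc n))"
      using mmD Dle[OF that] by (meson less_le_not_le add_right_mono order_trans)
  qed
  have orth: "cinner (y - m) v = 0" if vM: "v \<in> M" for v
  proof (rule ccontr)
    assume qn: "cinner (y - m) v \<noteq> 0"
    define q where "q = cinner (y - m) v"
    define V where "V = (norm v)\<^sup>2"
    define r where "r = 1 / (V + 1)"
    define t where "t = complex_of_real r * q"
    have V0: "0 \<le> V" by (simp add: V_def)
    have r0: "0 < r" using V0 by (simp add: r_def)
    have "m + cscale t v \<in> M" using ad[OF mM sc[OF vM]] .
    then have "(norm (y - m))\<^sup>2 \<le> (norm (y - m - cscale t v))\<^sup>2"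
      using minim by (simp add: diff_diff_eq)
    also have "\<dots> = (norm (y - m))\<^sup>2 - 2 * Re (cnj t * q) + (cmod t)\<^sup>2 * V"
      using ci.expand[of "y - m" t v] by (simp add: ci.nn_sq[symmetric] ci_nn q_def V_def)
    also have "cnj t * q = complex_of_real (r * (cmod q)\<^sup>2)"
      unfolding t_def of_real_mult complex_norm_square by (simp add: mult.commute)
    also have "(cmod t)\<^sup>2 = r\<^sup>2 * (cmod q)\<^sup>2" using r0 by (simp add: t_def norm_mult power_mult_distrib)
    finally have "2 * r * (cmod q)\<^sup>2 \<le> r\<^sup>2 * (cmod q)\<^sup>2 * V" by simp
    then have "2 * (cmod q)\<^sup>2 \<le> r * V * (cmod q)\<^sup>2" using r0
      by (simp add: power2_eq_square field_simps)
    moreover have "r * V < 1" using V0 by (simp add: r_def)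
    moreover have "0 < (cmod q)\<^sup>2" using qn by (simp add: q_def)
    ultimately have "2 * (cmod q)\<^sup>2 < 1 * (cmod q)\<^sup>2"
      by (meson mult_strict_right_mono order_le_less_trans)
    then show False using \<open>0 < (cmod q)\<^sup>2\<close> by simp
  qed
  show ?thesis using mM orth by blast
qed


lemma riesz:
  fixes f :: "'a::chilbert \<Rightarrow> complex"
  assumes fa: "\<And>x y. f (x + y) = f x + f y" and fc: "\<And>c x. f (cscale c x) = c * f x"
    and fb: "\<And>x. cmod (f x) \<le> K * norm x"
  shows "\<exists>w. \<forall>x. f x = cinner x w"
proof (cases "\<forall>x. f x = 0")
  case True
  then show ?thesis by (intro exI[of _ 0]) simp
next
  case False
  then obtain x0 where x0: "f x0 \<noteq> 0" by blast
  have f0: "f 0 = 0" using fa[of 0 0] by simp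
  have fd: "f (x - y) = f x - f y" for x y using fa[of "x - y" y] by (simp add: eq_diff_eq)
  have bl: "bounded_linear f"
    by (rule bounded_linear_intro[of _ K])
       (use fa fc fb in \<open>simp_all add: scaleR_cscale scaleR_conv_of_real mult.commute\<close>)
  define N where "N = {x. f x = 0}"
  have cl: "closed N" unfolding N_def
    by (rule closed_Collect_eq) (simp_all add: linear_continuous_on[OF bl])
  obtain m where mN: "m \<in> N" and orth: "\<And>v. v \<in> N \<Longrightarrow> cinner (x0 - m) v = 0"
    using proj[OF cl, of x0] f0 fa fc unfolding N_def by auto
  define u where "u = x0 - m"
  have fu: "f u = f x0" using mN by (simp add: u_def fd N_def)
  have un: "u \<noteq> 0" using fu x0 f0 by auto
  define k where "k = cinner u u"
  have k: "k \<noteq> 0" using un by (simp add: k_def cinner_self_eq_zero)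
  define w where "w = cscale (cnj (f u / k)) u"
  have "f x = cinner x w" for x
  proof -
    define z where "z = x - cscale (f x / f u) u"
    have "z \<in> N" using fu x0 by (simp add: N_def z_def fd fc)
    then have "cinner u z = 0" using orth u_def by simp
    then have "cinner z u = 0" using cinner_commute[of z u] by simp
    then have "cinner x u = (f x / f u) * k"
      by (simp add: z_def ci.diff_left cinner_cscale_left k_def)
    then show ?thesis using k fu x0
      by (simp add: w_def ci.cscale_right field_simps)
  qed
  then show ?thesis by blast
qed

lemma adj_prop:
  fixes T :: "'a::chilbert \<Rightarrow> 'a"
  assumes "bounded_op T"
  shows "cinner (T x) y = cinner x (adj T y)"
proof -
  obtain K where K0: "0 \<le> K" and K: "\<And>x. norm (T x) \<le> K * norm x"
    using bounded_op_K[OF assms] by blast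
  have T: "clinear T" using assms by (simp add: bounded_op_def)
  have "\<exists>w. \<forall>x. cinner (T x) y = cinner x w" for y
  proof (rule riesz[of _ "K * norm y"])
    show "cinner (T (a + b)) y = cinner (T a) y + cinner (T b) y" for a b
      by (simp add: clinear_add[OF T] cinner_add_left)
    show "cinner (T (cscale c a)) y = c * cinner (T a) y" for c a
      using T by (simp add: clinear_def cinner_cscale_left)
    show "cmod (cinner (T a) y) \<le> K * norm y * norm a" for a
    proof -
      have "cmod (cinner (T a) y) \<le> norm (T a) * norm y" using ci.cs[of "T a" y] by (simp add: ci_nn)
      also have "\<dots> \<le> K * norm a * norm y" using K[of a] by (simp add: mult_right_mono)
      finally show ?thesis by (simp add: mult_ac)
    qed
  qed
  then obtain S where S: "\<forall>y x. cinner (T x) y = cinner x (S y)" by metis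
  have "\<forall>x y. cinner (T x) y = cinner x (adj T y)"
    unfolding adj_def
  proof (rule theI[of _ S])
    show "\<forall>x y. cinner (T x) y = cinner x (S y)" using S by blast
    fix S' assume S': "\<forall>x y. cinner (T x) y = cinner x (S' y)"
    show "S' = S"
    proof
      fix y show "S' y = S y"
      proof (rule cinner_ext)
        fix x
        have "cinner x (S' y) = cinner (T x) y" using S' by simp
        also have "\<dots> = cinner x (S y)" using S by simp
        finally show "cinner x (S' y) = cinner x (S y)" .
      qed
    qed
  qed
  then show ?thesis by blast
qed

lemma posA_selfadj:
  assumes "positive_op A"
  shows "cinner (A x) y = cinner x (A y)"
proof -
  have A: "clinear A" using assms by (simp add: positive_op_def bounded_op_def)
  have im: "Im (cinner (A z) z) = 0" for z using assms by (simp add: positive_op_def)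
  define s where "s = cinner (A x) y"
  define t where "t = cinner (A y) x"
  have "Im (cinner (A (x + y)) (x + y)) = 0" by (rule im)
  then have i1: "Im (s + t) = 0"
    using im[of x] im[of y] by (simp add: clinear_add[OF A] cinner_add_left ci.add_right s_def t_def)
  have "Im (cinner (A (x + cscale \<i> y)) (x + cscale \<i> y)) = 0" by (rule im)
  then have i2: "Im (- \<i> * s + \<i> * t) = 0"
    using im[of x] im[of y] A
    by (simp add: clinear_def cinner_add_left ci.add_right cinner_cscale_left ci.cscale_right s_def t_def)
  have "t = cnj s" using i1 i2 by (simp add: complex_eq_iff)
  then show ?thesis using cinner_commute[of "A y" x] by (simp add: s_def t_def)
qed

lemma sipA: "positive_op A \<Longrightarrow> sip (innerA A)"
proof
  assume A: "positive_op A"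
  then have Al: "clinear A" by (simp add: positive_op_def bounded_op_def)
  show "innerA A (x + y) z = innerA A x z + innerA A y z" for x y z
    by (simp add: innerA_def clinear_add[OF Al] cinner_add_left)
  show "innerA A (cscale c x) y = c * innerA A x y" for c x y
    using Al by (simp add: innerA_def clinear_def cinner_cscale_left)
  show "innerA A y x = cnj (innerA A x y)" for x y
    unfolding innerA_def posA_selfadj[OF A, of y x] by (rule cinner_commute)
  show "0 \<le> Re (innerA A x x)" for x
    using A by (simp add: innerA_def positive_op_def)
qed

lemma nnA: "positive_op A \<Longrightarrow> sip.nn (innerA A) = normA A"
  by (simp add: fun_eq_iff sip.nn_def[OF sipA] normA_def innerA_def)



lemma posA_clinear: "positive_op A \<Longrightarrow> clinear A"
  by (simp add: positive_op_def bounded_op_def)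

lemma uniqA:
  assumes "A z1 = A z2" "\<forall>w. A w = 0 \<longrightarrow> cinner z1 w = 0" "\<forall>w. A w = 0 \<longrightarrow> cinner z2 w = 0"
    and Al: "clinear A"
  shows "z1 = z2"
proof -
  have "A (z1 - z2) = 0" using assms(1) by (simp add: clinear_diff[OF Al])
  then have "cinner z1 (z1 - z2) = 0" "cinner z2 (z1 - z2) = 0" using assms(2,3) by auto
  then have "cinner (z1 - z2) (z1 - z2) = 0" by (simp add: ci.diff_left)
  then show ?thesis by (simp add: cinner_self_eq_zero)
qed

lemma sharp_char:
  fixes A T :: "'a::chilbert \<Rightarrow> 'a"
  assumes A: "positive_op A" and T: "inBA A T"
  obtains S0 where "bounded_op S0" "\<And>x y. innerA A (T x) y = innerA A x (S0 y)"
    "\<And>x. A (sharpA A T x) = A (S0 x)" "\<And>x. A (sharpA A T x) = adj T (A x)"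
    "\<And>x w. A w = 0 \<Longrightarrow> cinner (sharpA A T x) w = 0"
proof -
  obtain S0 where S0: "bounded_op S0" and S0i: "\<And>x y. innerA A (T x) y = innerA A x (S0 y)"
    using T unfolding inBA_def by blast
  have Tb: "bounded_op T" using T by (simp add: inBA_def)
  have Al: "clinear A" by (rule posA_clinear[OF A])
  have adjA: "adj T (A x) = A (S0 x)" for x
  proof (rule cinner_ext)
    fix u
    have "cinner u (adj T (A x)) = cinner (T u) (A x)" by (simp add: adj_prop[OF Tb])
    also have "\<dots> = cinner (A (T u)) x" by (simp add: posA_selfadj[OF A])
    also have "\<dots> = innerA A u (S0 x)" using S0i[of u x] by (simp add: innerA_def)
    also have "\<dots> = cinner u (A (S0 x))" by (simp add: innerA_def posA_selfadj[OF A])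
    finally show "cinner u (adj T (A x)) = cinner u (A (S0 x))" .
  qed
  define N where "N = {w. A w = 0}"
  have blA: "bounded_linear A" using A by (simp add: positive_op_def bounded_op_real)
  have cl: "closed N" unfolding N_def
    by (rule closed_Collect_eq) (simp_all add: linear_continuous_on[OF blA])
  have ex: "\<exists>z. A z = adj T (A x) \<and> (\<forall>w. A w = 0 \<longrightarrow> cinner z w = 0)" for x
  proof -
    obtain m where mN: "m \<in> N" and orth: "\<And>v. v \<in> N \<Longrightarrow> cinner (S0 x - m) v = 0"
      using proj[OF cl, of "S0 x"] Al
      unfolding N_def by (auto simp: clinear_zero clinear_add clinear_def)
    show ?thesis
      by (rule exI[of _ "S0 x - m"]) (use mN orth in \<open>auto simp: N_def adjA clinear_diff[OF Al]\<close>)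
  qed
  have sh: "A (sharpA A T x) = adj T (A x) \<and> (\<forall>w. A w = 0 \<longrightarrow> cinner (sharpA A T x) w = 0)" for x
  proof -
    obtain z where z: "A z = adj T (A x) \<and> (\<forall>w. A w = 0 \<longrightarrow> cinner z w = 0)" using ex by blast
    have "sharpA A T x = z" unfolding sharpA_def
      by (rule the_equality) (use z uniqA[OF _ _ _ Al] in auto)
    then show ?thesis using z by simp
  qed
  show ?thesis
    by (rule that[OF S0 S0i]) (use sh adjA in auto)
qed

lemma sharp_inner:
  fixes A T :: "'a::chilbert \<Rightarrow> 'a"
  assumes A: "positive_op A" and T: "inBA A T"
  shows "innerA A (sharpA A T x) y = innerA A x (T y)"
proof -
  obtain S0 where h: "\<And>x. A (sharpA A T x) = adj T (A x)"
    using sharp_char[OF A T] by metis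
  have Tb: "bounded_op T" using T by (simp add: inBA_def)
  have "innerA A (sharpA A T x) y = cinner (adj T (A x)) y" by (simp add: innerA_def h)
  also have "\<dots> = cnj (cinner y (adj T (A x)))" by (rule cinner_commute)
  also have "\<dots> = cnj (cinner (T y) (A x))" by (simp add: adj_prop[OF Tb])
  also have "\<dots> = innerA A x (T y)" by (metis cinner_commute innerA_def)
  finally show ?thesis .
qed

lemma sharp_clinear:
  fixes A T :: "'a::chilbert \<Rightarrow> 'a"
  assumes A: "positive_op A" and T: "inBA A T"
  shows "clinear (sharpA A T)"
proof -
  obtain S0 where S0: "bounded_op S0"
    and h1: "\<And>x. A (sharpA A T x) = A (S0 x)"
    and h2: "\<And>x w. A w = 0 \<Longrightarrow> cinner (sharpA A T x) w = 0"
    using sharp_char[OF A T] by metis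
  have Al: "clinear A" by (rule posA_clinear[OF A])
  have Sl: "clinear S0" using S0 by (simp add: bounded_op_def)
  show ?thesis unfolding clinear_def
  proof (intro conjI allI)
    fix x y
    show "sharpA A T (x + y) = sharpA A T x + sharpA A T y"
      by (rule uniqA[OF _ _ _ Al])
         (use h1 h2 in \<open>auto simp: clinear_add[OF Al] clinear_add[OF Sl] cinner_add_left\<close>)
  next
    fix c x
    show "sharpA A T (cscale c x) = cscale c (sharpA A T x)"
      by (rule uniqA[OF _ _ _ Al])
         (use h1 h2 Al Sl in \<open>auto simp: clinear_def cinner_cscale_left\<close>)
  qed
qed

lemma ReA_clinear:
  fixes A T :: "'a::chilbert \<Rightarrow> 'a"
  assumes A: "positive_op A" and T: "inBA A T"
  shows "clinear (ReA A T)"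
proof -
  have Sl: "clinear (sharpA A T)" by (rule sharp_clinear[OF A T])
  have Tl: "clinear T" using T by (simp add: inBA_def bounded_op_def)
  show ?thesis using Sl Tl unfolding clinear_def ReA_def
    by (simp add: cscale_add_right cscale_cscale algebra_simps)
qed

lemma ReA_inner:
  fixes A T :: "'a::chilbert \<Rightarrow> 'a"
  assumes A: "positive_op A" and T: "inBA A T"
  shows "innerA A (ReA A T x) y = 1/2 * (innerA A (T x) y + innerA A x (T y))"
proof -
  interpret s: sip "innerA A" by (rule sipA[OF A])
  show ?thesis unfolding ReA_def
    by (simp add: s.cscale_left s.add_left sharp_inner[OF A T])
qed

lemma inBA_rot:
  fixes A T :: "'a::chilbert \<Rightarrow> 'a"
  assumes A: "positive_op A" and T: "inBA A T"
  shows "inBA A (\<lambda>x. cscale e (T x))"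
proof -
  interpret s: sip "innerA A" by (rule sipA[OF A])
  obtain S0 where S0: "bounded_op S0" and S0i: "\<And>x y. innerA A (T x) y = innerA A x (S0 y)"
    using T unfolding inBA_def by blast
  have Tb: "bounded_op T" using T by (simp add: inBA_def)
  have nsc: "norm (cscale c v) = cmod c * norm v" for c and v :: 'a
    using ci.nn_cscale[of c v] by (simp add: ci_nn)
  have bo: "bounded_op (\<lambda>x. cscale c (R x))" if R: "bounded_op R" for c and R :: "'a \<Rightarrow> 'a"
  proof -
    obtain K where K: "\<And>x. norm (R x) \<le> K * norm x" using R unfolding bounded_op_def by blast
    have Rl: "clinear R" using R by (simp add: bounded_op_def)
    have "clinear (\<lambda>x. cscale c (R x))" using Rl unfolding clinear_def
      by (simp add: cscale_add_right cscale_cscale mult.commute)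
    moreover have "norm (cscale c (R x)) \<le> (cmod c * K) * norm x" for x
      using K[of x] by (simp add: nsc mult.assoc mult_left_mono)
    ultimately show ?thesis unfolding bounded_op_def by blast
  qed
  show ?thesis unfolding inBA_def
  proof (intro conjI exI[of _ "\<lambda>x. cscale (cnj e) (S0 x)"])
    show "bounded_op (\<lambda>x. cscale e (T x))" by (rule bo[OF Tb])
    show "bounded_op (\<lambda>x. cscale (cnj e) (S0 x))" by (rule bo[OF S0])
    show "\<forall>x y. innerA A (cscale e (T x)) y = innerA A x (cscale (cnj e) (S0 y))"
      by (simp add: s.cscale_left s.cscale_right S0i)
  qed
qed



lemma growth_bound:
  fixes r L C :: real
  assumes r: "0 \<le> r" and L: "0 \<le> L" and C: "0 < C" and h: "\<And>k. r ^ k \<le> C * L ^ k"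
  shows "r \<le> L"
proof (rule LIMSEQ_le_const)
  show "(\<lambda>k. root k C * L) \<longlonglongrightarrow> L"
    using tendsto_mult[OF LIMSEQ_root_const[OF C] tendsto_const[of L]] by simp
  show "\<exists>N. \<forall>k\<ge>N. r \<le> root k C * L"
  proof (intro exI[of _ 1] allI impI)
    fix k :: nat assume k: "1 \<le> k"
    then have kp: "0 < k" by simp
    have "r = root k (r ^ k)" using real_root_power_cancel[OF kp r] by simp
    also have "\<dots> \<le> root k (C * L ^ k)" by (rule real_root_le_mono[OF kp h])
    also have "\<dots> = root k C * L"
      by (simp add: real_root_mult real_root_power_cancel[OF kp L])
    finally show "r \<le> root k C * L" .
  qed
qed

lemma Abdd:
  fixes A T :: "'a::chilbert \<Rightarrow> 'a"
  assumes A: "positive_op A" and T: "inBA A T"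
  obtains K where "0 \<le> K" "\<And>x. normA A (T x) \<le> K * normA A x"
proof -
  interpret s: sip "innerA A" by (rule sipA[OF A])
  have nn: "s.nn = normA A" by (rule nnA[OF A])
  obtain S0 where S0: "bounded_op S0" and S0i: "\<And>x y. innerA A (T x) y = innerA A x (S0 y)"
    using T unfolding inBA_def by blast
  have Tb: "bounded_op T" using T by (simp add: inBA_def)
  obtain KT where KT0: "0 \<le> KT" and KT: "\<And>x. norm (T x) \<le> KT * norm x"
    using bounded_op_K[OF Tb] by blast
  obtain KS where KS0: "0 \<le> KS" and KS: "\<And>x. norm (S0 x) \<le> KS * norm x"
    using bounded_op_K[OF S0] by blast
  have Ab: "bounded_op A" using A by (simp add: positive_op_def)
  obtain KA where KA0: "0 \<le> KA" and KA: "\<And>x. norm (A x) \<le> KA * norm x"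
    using bounded_op_K[OF Ab] by blast
  define R where "R = (\<lambda>x. S0 (T x))"
  define L where "L = KS * KT"
  have L0: "0 \<le> L" using KS0 KT0 by (simp add: L_def)
  have RL: "norm (R x) \<le> L * norm x" for x
  proof -
    have "norm (R x) \<le> KS * norm (T x)" using KS by (simp add: R_def)
    also have "\<dots> \<le> KS * (KT * norm x)" using KT[of x] KS0 by (rule mult_left_mono)
    finally show ?thesis by (simp add: L_def mult.assoc)
  qed
  define c where "c = sqrt KA"
  have c0: "0 \<le> c" using KA0 by (simp add: c_def)
  have nA: "s.nn y \<le> c * norm y" for y
  proof -
    have "(s.nn y)\<^sup>2 = Re (cinner (A y) y)" by (simp add: s.nn_sq innerA_def)
    also have "\<dots> \<le> cmod (cinner (A y) y)" by (rule complex_Re_le_cmod)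
    also have "\<dots> \<le> norm (A y) * norm y" using ci.cs[of "A y" y] by (simp add: ci_nn)
    also have "\<dots> \<le> KA * norm y * norm y" using KA[of y] by (simp add: mult_right_mono)
    also have "\<dots> = (c * norm y)\<^sup>2" using KA0 by (simp add: c_def power_mult_distrib power2_eq_square)
    finally show ?thesis by (rule power2_le_imp_le) (simp add: c0)
  qed
  have S0T: "innerA A (S0 w) v = innerA A w (T v)" for w v
    by (metis S0i s.herm)
  have Rsa: "innerA A (R u) v = innerA A u (R v)" for u v
    by (metis R_def S0T S0i)
  have Rb: "s.nn (R x) \<le> L * s.nn x" for x
  proof -
    define f where "f k = s.nn ((R ^^ k) x)" for k
    have f0: "0 \<le> f k" for k by (simp add: f_def)
    have fsq: "(f (Suc k))\<^sup>2 \<le> f (Suc (Suc k)) * f k" for k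
    proof -
      define v where "v = (R ^^ k) x"
      have "(f (Suc k))\<^sup>2 = Re (innerA A (R v) (R v))" by (simp add: f_def v_def s.nn_sq)
      also have "\<dots> = Re (innerA A (R (R v)) v)" by (simp add: Rsa)
      also have "\<dots> \<le> s.nn (R (R v)) * s.nn v" by (rule s.cs_Re)
      finally show ?thesis by (simp add: f_def v_def)
    qed
    have fz: "f (Suc k) = 0" if "f k = 0" for k
      using fsq[of k] that by simp
    have normpow: "norm ((R ^^ k) x) \<le> L ^ k * norm x" for k
    proof (induction k)
      case 0 then show ?case by simp
    next
      case (Suc k)
      have "norm ((R ^^ Suc k) x) \<le> L * norm ((R ^^ k) x)" using RL by simp
      also have "\<dots> \<le> L * (L ^ k * norm x)" using Suc L0 by (rule mult_left_mono)
      finally show ?case by (simp add: mult.assoc)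
    qed
    have fup: "f k \<le> c * L ^ k * norm x" for k
    proof -
      have "f k \<le> c * norm ((R ^^ k) x)" by (simp add: f_def nA)
      also have "\<dots> \<le> c * (L ^ k * norm x)" using normpow c0 by (rule mult_left_mono)
      finally show ?thesis by (simp add: mult.assoc)
    qed
    have "f 1 \<le> L * f 0"
    proof (cases "f 0 = 0")
      case True
      then show ?thesis using fz[of 0] by simp
    next
      case False
      then have fp: "0 < f 0" using f0[of 0] by linarith
      define r where "r = f 1 / f 0"
      have r0: "0 \<le> r" using f0 fp by (simp add: r_def)
      have step: "r * f k \<le> f (Suc k)" for k
      proof (induction k)
        case 0 then show ?case using fp by (simp add: r_def)
      next
        case (Suc k)
        show ?case
        proof (cases "f k = 0")
          case True
          then show ?thesis using fz[of k] f0 by simp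
        next
          case False
          then have fkp: "0 < f k" using f0[of k] by linarith
          have "f (Suc k) * (r * f k) \<le> f (Suc k) * f (Suc k)"
            using Suc.IH f0 by (rule mult_left_mono)
          also have "\<dots> \<le> f (Suc (Suc k)) * f k" using fsq[of k] by (simp add: power2_eq_square)
          finally have "(r * f (Suc k)) * f k \<le> f (Suc (Suc k)) * f k" by (simp add: mult_ac)
          then show ?thesis using fkp by simp
        qed
      qed
      have pw: "r ^ k * f 0 \<le> f k" for k
      proof (induction k)
        case 0 then show ?case by simp
      next
        case (Suc k)
        have "r ^ Suc k * f 0 = r * (r ^ k * f 0)" by simp
        also have "\<dots> \<le> r * f k" using Suc r0 by (rule mult_left_mono)
        also have "\<dots> \<le> f (Suc k)" by (rule step)
        finally show ?case .
      qed
      define C where "C = c * norm x / f 0 + 1"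
      have C: "0 < C" using c0 fp by (simp add: C_def add_nonneg_pos)
      have "r ^ k \<le> C * L ^ k" for k
      proof -
        have "r ^ k * f 0 \<le> c * L ^ k * norm x" using pw[of k] fup[of k] by linarith
        then have "r ^ k \<le> c * norm x / f 0 * L ^ k" using fp by (simp add: field_simps)
        also have "\<dots> \<le> C * L ^ k" by (intro mult_right_mono) (simp_all add: C_def L0)
        finally show ?thesis .
      qed
      then have "r \<le> L" by (rule growth_bound[OF r0 L0 C])
      then have "r * f 0 \<le> L * f 0" using fp by (simp add: mult_right_mono)
      then show ?thesis using fp by (simp add: r_def)
    qed
    then show ?thesis by (simp add: f_def)
  qed
  have "normA A (T x) \<le> sqrt L * normA A x" for x
  proof -
    have "(s.nn (T x))\<^sup>2 = Re (innerA A x (R x))" by (simp add: s.nn_sq S0i R_def)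
    also have "\<dots> \<le> s.nn x * s.nn (R x)" by (rule s.cs_Re)
    also have "\<dots> \<le> s.nn x * (L * s.nn x)" by (rule mult_left_mono[OF Rb]) simp
    also have "\<dots> = (sqrt L * s.nn x)\<^sup>2" using L0 by (simp add: power_mult_distrib power2_eq_square)
    finally have "s.nn (T x) \<le> sqrt L * s.nn x" by (rule power2_le_imp_le) (simp add: L0)
    then show ?thesis by (simp add: nn)
  qed
  then show ?thesis using that[of "sqrt L"] L0 by simp
qed



lemma unit_exists:
  fixes A :: "'a::chilbert \<Rightarrow> 'a"
  assumes A: "positive_op A" and nz: "A \<noteq> (\<lambda>_. 0)"
  shows "\<exists>x. normA A x = 1"
proof -
  interpret s: sip "innerA A" by (rule sipA[OF A])
  have nn: "s.nn = normA A" by (rule nnA[OF A])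
  obtain y where y: "A y \<noteq> 0" using nz by auto
  have "\<exists>z. normA A z \<noteq> 0"
  proof (rule ccontr)
    assume "\<not> ?thesis"
    then have "cmod (innerA A y (A y)) \<le> 0" using s.cs[of y "A y"] by (simp add: nn)
    then have "cinner (A y) (A y) = 0" by (simp add: innerA_def)
    then show False using y by (simp add: cinner_self_eq_zero)
  qed
  then obtain z where z: "normA A z \<noteq> 0" by blast
  then have zp: "0 < normA A z" using s.nn_nonneg[of z] nn by simp
  have "normA A (scaleR (1 / normA A z) z) = 1"
    using s.nn_scaleR[of "1 / normA A z" z] zp by (simp add: nn)
  then show ?thesis by blast
qed

lemma omega_facts:
  fixes A Z :: "'a::chilbert \<Rightarrow> 'a"
  assumes A: "positive_op A" and Z: "clinear Z" and K: "\<And>x. normA A (Z x) \<le> K * normA A x"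
    and un: "\<exists>x. normA A x = 1"
  shows "0 \<le> omegaA A Z" "\<And>u. cmod (innerA A (Z u) u) \<le> omegaA A Z * (normA A u)\<^sup>2"
proof -
  interpret s: sip "innerA A" by (rule sipA[OF A])
  have nn: "s.nn = normA A" by (rule nnA[OF A])
  define Om where "Om = {cmod (innerA A (Z x) x) | x. normA A x = 1}"
  have ne: "Om \<noteq> {}" using un unfolding Om_def by blast
  have bdd: "bdd_above Om"
  proof (rule bdd_aboveI)
    fix s assume "s \<in> Om"
    then obtain u where u: "normA A u = 1" "s = cmod (innerA A (Z u) u)" unfolding Om_def by blast
    have "s \<le> normA A (Z u) * normA A u" using s.cs[of "Z u" u] u by (simp add: nn)
    then show "s \<le> K" using K[of u] u by simp
  qed
  have up: "cmod (innerA A (Z u) u) \<le> omegaA A Z" if "normA A u = 1" for u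
    unfolding omegaA_def Om_def[symmetric] by (rule cSup_upper[OF _ bdd]) (use that Om_def in blast)
  show "0 \<le> omegaA A Z" using un up by (meson norm_ge_zero order_trans)
  show "cmod (innerA A (Z u) u) \<le> omegaA A Z * (normA A u)\<^sup>2" for u
    by (rule s.hom[unfolded nn, OF Z up])
qed

lemma rot_lemma:
  fixes A T :: "'a::chilbert \<Rightarrow> 'a"
  assumes A: "positive_op A" and T: "inBA A T" and e: "cmod e = 1"
    and bT: "\<And>u. cmod (innerA A (T u) u) \<le> a * (normA A u)\<^sup>2" and a: "0 \<le> a"
  defines "X \<equiv> ReA A (\<lambda>x. cscale e (T x))"
  shows "clinear X" "sip.selfadj (innerA A) X"
    "\<And>v. cmod (innerA A (X v) v) \<le> a * (normA A v)\<^sup>2"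
    "\<And>v. normA A (X v) \<le> a * normA A v"
    "\<And>v. Re (innerA A (X v) v) = Re (e * innerA A (T v) v)"
proof -
  interpret s: sip "innerA A" by (rule sipA[OF A])
  have nn: "s.nn = normA A" by (rule nnA[OF A])
  have T': "inBA A (\<lambda>x. cscale e (T x))" by (rule inBA_rot[OF A T])
  have Xi: "innerA A (X u) v = 1/2 * (e * innerA A (T u) v + cnj e * innerA A u (T v))" for u v
    unfolding X_def ReA_inner[OF A T'] by (simp add: s.cscale_left s.cscale_right)
  show Xl: "clinear X" unfolding X_def by (rule ReA_clinear[OF A T'])
  show sa: "s.selfadj X" unfolding s.selfadj_def
  proof (intro allI)
    fix u v
    have "innerA A u (X v) = cnj (innerA A (X v) u)" by (rule s.herm)
    also have "\<dots> = 1/2 * (cnj e * cnj (innerA A (T v) u) + e * cnj (innerA A v (T u)))"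
      by (simp add: Xi)
    also have "\<dots> = innerA A (X u) v"
      by (simp add: Xi flip: s.herm)
    finally show "innerA A (X u) v = innerA A u (X v)" by simp
  qed
  have Xvv: "innerA A (X v) v = complex_of_real (Re (e * innerA A (T v) v))" for v
  proof -
    define z where "z = e * innerA A (T v) v"
    have h: "innerA A (X v) v = 1/2 * (z + cnj z)"
      by (simp add: Xi z_def flip: s.herm)
    have "z + cnj z = 2 * complex_of_real (Re z)" by (simp add: complex_eq_iff)
    then have "innerA A (X v) v = complex_of_real (Re z)" using h by simp
    then show ?thesis by (simp add: z_def)
  qed
  show "Re (innerA A (X v) v) = Re (e * innerA A (T v) v)" for v by (simp add: Xvv)
  have bX: "cmod (innerA A (X v) v) \<le> a * (normA A v)\<^sup>2" for v
  proof -
    have "cmod (innerA A (X v) v) = \<bar>Re (e * innerA A (T v) v)\<bar>" by (simp only: Xvv norm_of_real)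
    also have "\<dots> \<le> cmod (e * innerA A (T v) v)" by (rule abs_Re_le_cmod)
    also have "\<dots> = cmod (innerA A (T v) v)" by (simp add: norm_mult e)
    also have "\<dots> \<le> a * (normA A v)\<^sup>2" by (rule bT)
    finally show ?thesis .
  qed
  show "cmod (innerA A (X v) v) \<le> a * (normA A v)\<^sup>2" for v by (rule bX)
  show "normA A (X v) \<le> a * normA A v" for v
    by (rule s.pol[unfolded nn, OF Xl sa a bX])
qed



theorem theorem3p4:
  fixes A T S :: "'a::chilbert \<Rightarrow> 'a"
  assumes "positive_op A" and "A \<noteq> (\<lambda>_. 0)"
    and "inBA A T" and "inBA A S"
  shows "omegaA A (\<lambda>x. T x + S x)
           \<le> 1/2 * (omegaA A T + omegaA A S +
                sqrt ((omegaA A T - omegaA A S)\<^sup>2 +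
                  4 * (SUP \<theta>::real. opnormA A
                        (ReA A (\<lambda>x. cscale (exp (\<i> * of_real \<theta>)) (T x)) \<circ>
                         ReA A (\<lambda>x. cscale (exp (\<i> * of_real \<theta>)) (S x))))))
       \<and> 1/2 * (omegaA A T + omegaA A S +
                sqrt ((omegaA A T - omegaA A S)\<^sup>2 +
                  4 * (SUP \<theta>::real. opnormA A
                        (ReA A (\<lambda>x. cscale (exp (\<i> * of_real \<theta>)) (T x)) \<circ>
                         ReA A (\<lambda>x. cscale (exp (\<i> * of_real \<theta>)) (S x))))))
           \<le> omegaA A T + omegaA A S"
proof -
  note A = assms(1) and T = assms(3) and S = assms(4)
  interpret s: sip "innerA A" by (rule sipA[OF A])
  have nn: "s.nn = normA A" by (rule nnA[OF A])
  have un: "\<exists>x. normA A x = 1" by (rule unit_exists[OF A assms(2)])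
  have Tl: "clinear T" using T by (simp add: inBA_def bounded_op_def)
  have Sl: "clinear S" using S by (simp add: inBA_def bounded_op_def)
  obtain KT where "0 \<le> KT" and KT: "\<And>x. normA A (T x) \<le> KT * normA A x" using Abdd[OF A T] by blast
  obtain KS where "0 \<le> KS" and KS: "\<And>x. normA A (S x) \<le> KS * normA A x" using Abdd[OF A S] by blast
  define a where "a = omegaA A T"
  define b where "b = omegaA A S"
  have a0: "0 \<le> a" and bT: "\<And>u. cmod (innerA A (T u) u) \<le> a * (normA A u)\<^sup>2"
    using omega_facts[OF A Tl KT un] by (simp_all add: a_def)
  have b0: "0 \<le> b" and bS: "\<And>u. cmod (innerA A (S u) u) \<le> b * (normA A u)\<^sup>2"
    using omega_facts[OF A Sl KS un] by (simp_all add: b_def)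
  define E where "E = (\<lambda>\<theta>::real. exp (\<i> * complex_of_real \<theta>))"
  have E1: "cmod (E \<theta>) = 1" for \<theta> by (simp add: E_def)
  define X where "X = (\<lambda>\<theta>. ReA A (\<lambda>x. cscale (E \<theta>) (T x)))"
  define Y where "Y = (\<lambda>\<theta>. ReA A (\<lambda>x. cscale (E \<theta>) (S x)))"
  define opn where "opn = (\<lambda>\<theta>. opnormA A (X \<theta> \<circ> Y \<theta>))"
  define M where "M = (SUP \<theta>. opn \<theta>)"
  have Meq: "(SUP \<theta>::real. opnormA A
                        (ReA A (\<lambda>x. cscale (exp (\<i> * of_real \<theta>)) (T x)) \<circ>
                         ReA A (\<lambda>x. cscale (exp (\<i> * of_real \<theta>)) (S x)))) = M"
    by (simp add: M_def opn_def X_def Y_def E_def)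
  have RX1: "clinear (X \<theta>)" for \<theta> unfolding X_def by (rule rot_lemma(1)[OF A T E1 bT a0])
  have RX2: "s.selfadj (X \<theta>)" for \<theta> unfolding X_def by (rule rot_lemma(2)[OF A T E1 bT a0])
  have RX3: "cmod (innerA A (X \<theta> v) v) \<le> a * (normA A v)\<^sup>2" for \<theta> v
    unfolding X_def by (rule rot_lemma(3)[OF A T E1 bT a0])
  have RX4: "normA A (X \<theta> v) \<le> a * normA A v" for \<theta> v
    unfolding X_def by (rule rot_lemma(4)[OF A T E1 bT a0])
  have RX5: "Re (innerA A (X \<theta> v) v) = Re (E \<theta> * innerA A (T v) v)" for \<theta> v
    unfolding X_def by (rule rot_lemma(5)[OF A T E1 bT a0])
  have RY1: "clinear (Y \<theta>)" for \<theta> unfolding Y_def by (rule rot_lemma(1)[OF A S E1 bS b0])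
  have RY2: "s.selfadj (Y \<theta>)" for \<theta> unfolding Y_def by (rule rot_lemma(2)[OF A S E1 bS b0])
  have RY3: "cmod (innerA A (Y \<theta> v) v) \<le> b * (normA A v)\<^sup>2" for \<theta> v
    unfolding Y_def by (rule rot_lemma(3)[OF A S E1 bS b0])
  have RY4: "normA A (Y \<theta> v) \<le> b * normA A v" for \<theta> v
    unfolding Y_def by (rule rot_lemma(4)[OF A S E1 bS b0])
  have RY5: "Re (innerA A (Y \<theta> v) v) = Re (E \<theta> * innerA A (S v) v)" for \<theta> v
    unfolding Y_def by (rule rot_lemma(5)[OF A S E1 bS b0])
  have XYb: "normA A (X \<theta> (Y \<theta> v)) \<le> a * b * normA A v" for \<theta> v
  proof -
    have "normA A (X \<theta> (Y \<theta> v)) \<le> a * normA A (Y \<theta> v)" by (rule RX4)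
    also have "\<dots> \<le> a * (b * normA A v)" using RY4 a0 by (rule mult_left_mono)
    finally show ?thesis by (simp add: mult.assoc)
  qed
  have opn_facts: "0 \<le> opn \<theta> \<and> opn \<theta> \<le> a * b \<and> (\<forall>v. normA A (X \<theta> (Y \<theta> v)) \<le> opn \<theta> * normA A v)"
    for \<theta>
  proof -
    define P where "P = {normA A ((X \<theta> \<circ> Y \<theta>) x) | x. normA A x = 1}"
    have opnP: "opn \<theta> = Sup P" by (simp add: opn_def opnormA_def P_def)
    have ne: "P \<noteq> {}" using un unfolding P_def by blast
    have le: "q \<le> a * b" if qP: "q \<in> P" for q
    proof -
      obtain x where "normA A x = 1" "q = normA A (X \<theta> (Y \<theta> x))" using qP unfolding P_def comp_apply by blast
      then show ?thesis using XYb[of \<theta> x] by simp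
    qed
    have bdd: "bdd_above P" using le by (intro bdd_aboveI) 
    have up: "normA A (X \<theta> (Y \<theta> u)) \<le> opn \<theta>" if "normA A u = 1" for u
      unfolding opnP by (rule cSup_upper[OF _ bdd]) (use that P_def in force)
    have o1: "opn \<theta> \<le> a * b" unfolding opnP by (rule cSup_least[OF ne le])
    have o0: "0 \<le> opn \<theta>" using un up by (meson s.nn_nonneg[unfolded nn] order_trans)
    have XYl: "clinear (X \<theta> \<circ> Y \<theta>)" using RX1 RY1 by (simp add: clinear_def)
    have z: "normA A ((X \<theta> \<circ> Y \<theta>) v) = 0" if "normA A v = 0" for v
      using XYb[of \<theta> v] that s.nn_nonneg[unfolded nn, of "X \<theta> (Y \<theta> v)"] by simp
    have "normA A ((X \<theta> \<circ> Y \<theta>) v) \<le> opn \<theta> * normA A v" for v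
      by (rule s.homn[unfolded nn, OF XYl _ z o0]) (use up in simp)
    then show ?thesis using o0 o1 by simp
  qed
  have bddM: "bdd_above (range opn)" using opn_facts by (intro bdd_aboveI) auto
  have opnM: "opn \<theta> \<le> M" for \<theta> unfolding M_def by (rule cSUP_upper[OF _ bddM]) simp
  have M0: "0 \<le> M" using opn_facts[of 0] opnM[of 0] by linarith
  have Mab: "M \<le> a * b" unfolding M_def by (rule cSUP_least) (use opn_facts in auto)
  have XYM: "normA A (X \<theta> (Y \<theta> v)) \<le> M * normA A v" for \<theta> v
  proof -
    have "normA A (X \<theta> (Y \<theta> v)) \<le> opn \<theta> * normA A v" using opn_facts by blast
    also have "\<dots> \<le> M * normA A v" using opnM by (rule mult_right_mono) (simp add: s.nn_nonneg[unfolded nn])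
    finally show ?thesis .
  qed
  define lam where "lam = 1/2 * (a + b + sqrt ((a - b)\<^sup>2 + 4 * M))"
  have first: "omegaA A (\<lambda>x. T x + S x) \<le> lam"
    unfolding omegaA_def
  proof (rule cSup_least)
    show "{cmod (innerA A (T x + S x) x) |x. normA A x = 1} \<noteq> {}" using un by blast
    fix r assume "r \<in> {cmod (innerA A (T x + S x) x) |x. normA A x = 1}"
    then obtain x where x: "normA A x = 1" and r: "r = cmod (innerA A (T x + S x) x)" by blast
    define q where "q = innerA A (T x + S x) x"
    define \<theta> where "\<theta> = - Arg q"
    have Eq: "E \<theta> * q = complex_of_real (cmod q)"
    proof -
      have "E \<theta> = cis (- Arg q)" by (simp add: E_def \<theta>_def cis_conv_exp)
      moreover have "q = complex_of_real (cmod q) * cis (Arg q)"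
        using rcis_cmod_Arg[of q] by (simp add: rcis_def)
      ultimately have "E \<theta> * q = complex_of_real (cmod q) * (cis (- Arg q) * cis (Arg q))"
        by (metis mult.left_commute)
      also have "cis (- Arg q) * cis (Arg q) = 1" by (simp add: cis_mult)
      finally show ?thesis by simp
    qed
    have "r = Re (E \<theta> * q)" using Eq r q_def by simp
    also have "\<dots> = Re (E \<theta> * innerA A (T x) x) + Re (E \<theta> * innerA A (S x) x)"
      by (simp add: q_def s.add_left algebra_simps)
    also have "\<dots> = Re (innerA A (X \<theta> x + Y \<theta> x) x)"
      by (simp add: s.add_left RX5 RY5)
    also have "\<dots> \<le> cmod (innerA A (X \<theta> x + Y \<theta> x) x)" by (rule complex_Re_le_cmod)
    also have "\<dots> \<le> lam" unfolding lam_def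
      by (rule s.key[unfolded nn, OF RX1 RY1 RX2 RY2 RX3 RY3 XYM a0 b0 M0 x])
    finally show "r \<le> lam" .
  qed
  have second: "lam \<le> a + b"
  proof -
    have "(a - b)\<^sup>2 + 4 * M \<le> (a + b)\<^sup>2" using Mab by (simp add: power2_eq_square algebra_simps)
    then have "sqrt ((a - b)\<^sup>2 + 4 * M) \<le> sqrt ((a + b)\<^sup>2)" by (rule real_sqrt_le_mono)
    also have "\<dots> = a + b" using a0 b0 by simp
    finally show ?thesis by (simp add: lam_def)
  qed
  show ?thesis using first second unfolding Meq lam_def a_def b_def by simp
qed


end
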